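(* Let $0<q<\tfrac13$, $\lambda>1$, $\Theta=(1/q)^{1/\lambda}$, and let $(\mathcal{Q}_n)_{n\in\mathbb{N}^+}$ be a sequence with $\mathcal{Q}_n\in10\mathbb{N}^+$, $\mathcal{Q}_{n+1}/\mathcal{Q}_n\in10\mathbb{N}^+$ for all $n$, and $\ell_1\exp(\Theta^n)\le\mathcal{Q}_n\le\ell_2\exp(\Theta^n)$ for some constants $0<\ell_1\le\ell_2$. Define \[ \mathscr{P}_{\mathscr{H}}(x_1,x_2,y_1,y_2)=\sum_{n=1}^\infty\frac{q^n}{\mathcal{Q}_n^6}\sin(\pi\mathcal{Q}_nx_1)+\sum_{n=1}^\infty\frac{q^n}{\mathcal{Q}_n^6}\sin(\pi\mathcal{Q}_ny_2). \] Then $\mathscr{P}_{\mathscr{H}}\in C^6(\mathbb{R}^4)$, and all its partial derivatives of order $6$ are $\lambda$-Logarithmic Hölder continuous: there are $C>0$ and $h_0\in(0,1)$ such that $|\partial^\alpha\mathscr{P}_{\mathscr{H}}(z+h)-\partial^\alpha\mathscr{P}_{\mathscr{H}}(z)|\le C(-\ln|h|)^{-\lambda}$ for all $|\alpha|=6$, $z\in\mathbb{R}^4$ and $0<|h|\le h_0$. However, the $6$-th order derivatives are nowhere Hölder continuous; more precisely, for $\mathscr{P}(x):=\sum_{n=1}^\infty q^n\sin(\pi\mathcal{Q}_nx)$ (so that $\partial_{x_1}^6\mathscr{P}_{\mathscr{H}}=-\pi^6\mathscr{P}(x_1)$), for every $x\in\mathbb{R}$ and every $\alpha\in(0,1)$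 there is a sequence $\upsilon_m\to0$, $\upsilon_m\ne0$, with \[ \lim_{m\to\infty}\frac{|\mathscr{P}(x+\upsilon_m)-\mathscr{P}(x)|}{|\upsilon_m|^\alpha}=+\infty. \]
   Context: $|\cdot|$ is the sup-norm on $\mathbb{R}^4$. *)

theory Defs
  imports "HOL-Analysis.Analysis"
begin

definition partial :: "'n::finite \<Rightarrow> (real^'n \<Rightarrow> real) \<Rightarrow> real^'n \<Rightarrow> real" where
  "partial i f z = deriv (\<lambda>t. f (z + t *\<^sub>R axis i 1)) 0"

text \<open>Iterated partial derivative along a list of coordinate indices (a multi-index of order length).\<close>
definition iter_partial :: "'n::finite list \<Rightarrow> (real^'n \<Rightarrow> real) \<Rightarrow> real^'n \<Rightarrow> real" where
  "iter_partial is f = foldr partial is f"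

fun Ck :: "nat \<Rightarrow> (real^'n::finite \<Rightarrow> real) \<Rightarrow> bool" where
  "Ck 0 f = continuous_on UNIV f"
| "Ck (Suc k) f = (continuous_on UNIV f \<and>
      (\<forall>i z. (\<lambda>t. f (z + t *\<^sub>R axis i 1)) differentiable (at 0)) \<and>
      (\<forall>i. Ck k (partial i f)))"

end

theory Submission
  imports Defs "HOL-Real_Asymp.Real_Asymp"
begin


definition trm :: "real \<Rightarrow> (nat \<Rightarrow> nat) \<Rightarrow> nat \<Rightarrow> nat \<Rightarrow> real \<Rightarrow> real" where
  "trm q Q k n x = q ^ Suc n / real (Q (Suc n)) ^ 6 * (pi * real (Q (Suc n))) ^ k
      * sin (pi * real (Q (Suc n)) * x + real k * pi / 2)"

definition gk :: "real \<Rightarrow> (nat \<Rightarrow> nat) \<Rightarrow> nat \<Rightarrow> real \<Rightarrow> real" where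
  "gk q Q k x = (\<Sum>n. trm q Q k n x)"

lemma partial_form:
  fixes A B A' B' :: "real \<Rightarrow> real"
  assumes dA: "\<And>x. (A has_real_derivative A' x) (at x)" and dB: "\<And>x. (B has_real_derivative B' x) (at x)"
  shows "partial i (\<lambda>z::real^4. A (z$1) + B (z$4))
     = (\<lambda>z. (if i = 1 then A' else (\<lambda>_. 0)) (z$1) + (if i = 4 then B' else (\<lambda>_. 0)) (z$4))"
    and "(\<lambda>t. (\<lambda>z::real^4. A (z$1) + B (z$4)) (z + t *\<^sub>R axis i 1)) differentiable (at 0)"
proof -
  have ch: "((\<lambda>t. C (y + t * c)) has_real_derivative C' y * c) (at 0)"
    if dC: "\<And>x. (C has_real_derivative C' x) (at x)" for C C' :: "real \<Rightarrow> real" and y c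
  proof -
    have h: "((\<lambda>t. y + t*c) has_real_derivative c) (at 0)" by (auto intro!: derivative_eq_intros)
    have "(C has_real_derivative C' y) (at ((\<lambda>t. y + t*c) 0))" using dC by simp
    from DERIV_chain2[OF this h] show ?thesis .
  qed
  have D: "((\<lambda>t. (\<lambda>z::real^4. A (z$1) + B (z$4)) (z + t *\<^sub>R axis i 1)) has_real_derivative
     (if i = 1 then A' else (\<lambda>_. 0)) (z$1) + (if i = 4 then B' else (\<lambda>_. 0)) (z$4)) (at 0)" for z
  proof -
    have eq: "(\<lambda>t. (\<lambda>z::real^4. A (z$1) + B (z$4)) (z + t *\<^sub>R axis i 1))
       = (\<lambda>t. A (z$1 + t * (if 1 = i then 1 else 0)) + B (z$4 + t * (if 4 = i then 1 else 0)))"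
      by (simp add: axis_def)
    have "((\<lambda>t. A (z$1 + t * (if 1 = i then 1 else 0)) + B (z$4 + t * (if 4 = i then 1 else 0)))
       has_real_derivative A' (z$1) * (if 1 = i then 1 else 0) + B' (z$4) * (if 4 = i then 1 else 0)) (at 0)"
      by (intro DERIV_add ch dA dB)
    then show ?thesis unfolding eq by (cases "i = 1"; cases "i = 4"; simp)
  qed
  show "partial i (\<lambda>z::real^4. A (z$1) + B (z$4))
     = (\<lambda>z. (if i = 1 then A' else (\<lambda>_. 0)) (z$1) + (if i = 4 then B' else (\<lambda>_. 0)) (z$4))"
    unfolding partial_def using D by (intro ext DERIV_imp_deriv) auto
  show "(\<lambda>t. (\<lambda>z::real^4. A (z$1) + B (z$4)) (z + t *\<^sub>R axis i 1)) differentiable (at 0)"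
    using D real_differentiable_def by blast
qed

context
  fixes q :: real and Q :: "nat \<Rightarrow> nat"
  assumes q0: "0 < q" and q1: "q < 1/3"
    and Qpos: "\<forall>n\<ge>1. Q n > 0 \<and> 10 dvd Q n"
begin

lemma Qge1: "real (Q (Suc n)) \<ge> 1"
  using Qpos by (metis Suc_le_eq less_one not_le of_nat_1 of_nat_le_iff zero_less_Suc)

lemma Qne: "real (Q (Suc n)) \<noteq> 0" "Q (Suc n) \<noteq> 0" using Qge1[of n] by auto

lemma trm_bound: assumes "k \<le> 6" shows "\<bar>trm q Q k n x\<bar> \<le> pi ^ 6 * q ^ Suc n"
proof -
  define R where "R = real (Q (Suc n))"
  have R1: "R \<ge> 1" using Qge1 R_def by simp
  have "\<bar>trm q Q k n x\<bar> = q ^ Suc n / R ^ 6 * (pi * R) ^ k * \<bar>sin (pi * R * x + real k * pi / 2)\<bar>"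
    unfolding trm_def R_def using q0 by (simp add: abs_mult)
  also have "\<dots> \<le> q ^ Suc n / R ^ 6 * (pi * R) ^ k * 1"
    by (intro mult_left_mono) (use q0 R1 in auto)
  also have "\<dots> = q ^ Suc n * pi ^ k * (R ^ k / R ^ 6)" by (simp add: power_mult_distrib)
  also have "\<dots> \<le> q ^ Suc n * pi ^ 6 * 1"
  proof (intro mult_mono)
    show "pi ^ k \<le> pi ^ 6" using assms by (intro power_increasing) (auto simp: pi_ge_two order.trans[OF _ pi_ge_two])
    show "R ^ k / R ^ 6 \<le> 1" using R1 assms by (simp add: power_increasing)
  qed (use q0 R1 in auto)
  finally show ?thesis by (simp add: mult_ac)
qed

lemma summable_geo: "summable (\<lambda>n. c * q ^ Suc n)"
  using q0 q1 by (intro summable_mult) (simp add: summable_geometric)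

lemma unif: assumes "k \<le> 6"
  shows "uniform_limit UNIV (\<lambda>n x. \<Sum>i<n. trm q Q k i x) (gk q Q k) sequentially"
proof -
  have "uniform_limit UNIV (\<lambda>n x. \<Sum>i<n. trm q Q k i x) (\<lambda>x. \<Sum>i. trm q Q k i x) sequentially"
    by (rule Weierstrass_m_test[OF _ summable_geo[of "pi^6"]]) (use trm_bound assms in auto)
  then show ?thesis by (simp add: gk_def[abs_def])
qed

lemma gk_cont: assumes "k \<le> 6" shows "continuous_on UNIV (gk q Q k)"
  by (rule uniform_limit_theorem[OF _ unif[OF assms]])
     (auto intro!: always_eventually continuous_intros simp: trm_def Qne)

lemma trm_deriv: "(trm q Q k n has_real_derivative trm q Q (Suc k) n x) (at x)"
proof -
  define R where "R = real (Q (Suc n))"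
  have "((\<lambda>x. q ^ Suc n / R ^ 6 * (pi * R) ^ k * sin (pi * R * x + real k * pi / 2)) has_real_derivative
     q ^ Suc n / R ^ 6 * (pi * R) ^ k * (cos (pi * R * x + real k * pi / 2) * (pi * R))) (at x)"
  proof -
    have "((\<lambda>x. sin (pi * R * x + real k * pi / 2)) has_real_derivative cos (pi * R * x + real k * pi / 2) * (pi * R)) (at x)"
      by (auto intro!: derivative_eq_intros)
    from DERIV_cmult[OF this, of "q ^ Suc n / R ^ 6 * (pi * R) ^ k"] show ?thesis by simp
  qed
  moreover have "sin (pi * R * x + real (Suc k) * pi / 2) = cos (pi * R * x + real k * pi / 2)"
  proof -
    have "pi * R * x + real (Suc k) * pi / 2 = (pi * R * x + real k * pi / 2) + pi/2"
      by (simp add: field_simps)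
    then show ?thesis by (simp only: sin_add[of "pi * R * x + real k * pi / 2" "pi/2"]) simp
  qed
  moreover have "R \<noteq> 0" using Qne R_def by simp
  then have "q ^ Suc n / R ^ 6 * (pi * R) ^ k * (cos (pi * R * x + real k * pi / 2) * (pi * R))
     = q ^ Suc n / R ^ 6 * (pi * R) ^ Suc k * cos (pi * R * x + real k * pi / 2)"
    by (simp add: mult_ac)
  ultimately show ?thesis unfolding trm_def R_def[symmetric] by (simp add: fun_eq_iff mult_ac)
qed

lemma gk_deriv: assumes "k \<le> 5" shows "(gk q Q k has_real_derivative gk q Q (Suc k) x) (at x)"
proof -
  have "((\<lambda>x. \<Sum>n. trm q Q k n x) has_field_derivative (\<Sum>n. trm q Q (Suc k) n x)) (at x)"
  proof (rule has_field_derivative_series'(2)[where S=UNIV and f="trm q Q k" and f'="\<lambda>n. trm q Q (Suc k) n"])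
    show "uniformly_convergent_on UNIV (\<lambda>n x. \<Sum>i<n. trm q Q (Suc k) i x)"
      by (rule Weierstrass_m_test'[OF _ summable_geo[of "pi^6"]]) (use trm_bound assms in auto)
    show "summable (\<lambda>n. trm q Q k n 0)"
      by (rule summable_comparison_test'[OF summable_geo[of "pi^6"]]) (use trm_bound assms in auto)
  qed (auto intro: trm_deriv)
  then show ?thesis by (simp add: gk_def[abs_def])
qed


lemma fam_deriv: assumes "j \<le> 5" "A \<in> {\<lambda>_. 0, gk q Q j}"
  shows "\<exists>A'. A' \<in> {\<lambda>_. 0, gk q Q (Suc j)} \<and> (\<forall>x. (A has_real_derivative A' x) (at x))"
  using assms gk_deriv by auto

lemma fam_cont: assumes "j \<le> 6" "A \<in> {\<lambda>_. 0, gk q Q j}" shows "continuous_on UNIV A"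
  using assms gk_cont by auto

lemma gk0: "gk q Q 0 x = (\<Sum>n. q ^ (Suc n) / real (Q (Suc n)) ^ 6 * sin (pi * real (Q (Suc n)) * x))"
  unfolding gk_def trm_def by simp

lemma gk6: "gk q Q 6 x = - (pi ^ 6) * (\<Sum>n. q ^ (Suc n) * sin (pi * real (Q (Suc n)) * x))"
proof -
  have "trm q Q 6 n x = - (pi ^ 6) * (q ^ (Suc n) * sin (pi * real (Q (Suc n)) * x))" for n
  proof -
    have e: "pi * real (Q (Suc n)) * x + real 6 * pi / 2 = (pi * real (Q (Suc n)) * x + pi) + 2 * pi" by simp
    have "sin (pi * real (Q (Suc n)) * x + real 6 * pi / 2) = - sin (pi * real (Q (Suc n)) * x)"
      unfolding e by (simp only: sin_periodic sin_periodic_pi)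
    then show ?thesis unfolding trm_def using Qne[of n]
      by (simp add: power_mult_distrib del: of_nat_numeral)
  qed
  moreover have "summable (\<lambda>n. q ^ (Suc n) * sin (pi * real (Q (Suc n)) * x))"
    by (rule summable_comparison_test'[OF summable_geo[of 1]]) (use q0 in \<open>auto simp: abs_mult\<close>)
  ultimately show ?thesis unfolding gk_def by (simp add: suminf_minus summable_mult suminf_mult)
qed


lemma cont_form: assumes "j \<le> 6" "A \<in> {\<lambda>_. 0, gk q Q j}" "B \<in> {\<lambda>_. 0, gk q Q j}"
  shows "continuous_on UNIV (\<lambda>z::real^4. A (z$1) + B (z$4))"
proof -
  have cA: "continuous_on UNIV A" "continuous_on UNIV B" using assms fam_cont by auto
  have "continuous_on UNIV (\<lambda>z::real^4. A (z$1))"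
    by (rule continuous_on_compose2[OF cA(1)]) (auto intro: continuous_intros)
  moreover have "continuous_on UNIV (\<lambda>z::real^4. B (z$4))"
    by (rule continuous_on_compose2[OF cA(2)]) (auto intro: continuous_intros)
  ultimately show ?thesis by (intro continuous_on_add)
qed

lemma Ck_fam: "j + m \<le> 6 \<Longrightarrow> A \<in> {\<lambda>_. 0, gk q Q j} \<Longrightarrow> B \<in> {\<lambda>_. 0, gk q Q j}
   \<Longrightarrow> Ck m (\<lambda>z::real^4. A (z$1) + B (z$4))"
proof (induction m arbitrary: j A B)
  case 0
  then show ?case using cont_form by simp
next
  case (Suc m)
  have j5: "j \<le> 5" using Suc.prems by simp
  obtain A' where A': "A' \<in> {\<lambda>_. 0, gk q Q (Suc j)}" "\<And>x. (A has_real_derivative A' x) (at x)"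
    using fam_deriv[OF j5 Suc.prems(2)] by blast
  obtain B' where B': "B' \<in> {\<lambda>_. 0, gk q Q (Suc j)}" "\<And>x. (B has_real_derivative B' x) (at x)"
    using fam_deriv[OF j5 Suc.prems(3)] by blast
  have "Ck m (partial i (\<lambda>z::real^4. A (z$1) + B (z$4)))" for i
    unfolding partial_form(1)[OF A'(2) B'(2)]
    by (rule Suc.IH[of "Suc j"]) (use Suc.prems A'(1) B'(1) in auto)
  moreover have "continuous_on UNIV (\<lambda>z::real^4. A (z$1) + B (z$4))"
    using cont_form[of j A B] Suc.prems by simp
  moreover have "(\<lambda>t. (\<lambda>z::real^4. A (z$1) + B (z$4)) (z + t *\<^sub>R axis i 1)) differentiable (at 0)" for i z
    by (rule partial_form(2)[OF A'(2) B'(2)])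
  ultimately show ?case by simp
qed

lemma iter_fam: "length \<alpha> \<le> 6 \<Longrightarrow> \<exists>A B. A \<in> {\<lambda>_. 0, gk q Q (length \<alpha>)} \<and> B \<in> {\<lambda>_. 0, gk q Q (length \<alpha>)}
   \<and> foldr partial \<alpha> (\<lambda>z::real^4. gk q Q 0 (z$1) + gk q Q 0 (z$4)) = (\<lambda>z. A (z$1) + B (z$4))"
proof (induction \<alpha>)
  case Nil
  then show ?case by auto
next
  case (Cons i \<alpha>)
  then obtain A B where AB: "A \<in> {\<lambda>_. 0, gk q Q (length \<alpha>)}" "B \<in> {\<lambda>_. 0, gk q Q (length \<alpha>)}"
    "foldr partial \<alpha> (\<lambda>z::real^4. gk q Q 0 (z$1) + gk q Q 0 (z$4)) = (\<lambda>z. A (z$1) + B (z$4))" by auto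
  have j5: "length \<alpha> \<le> 5" using Cons.prems by simp
  obtain A' where A': "A' \<in> {\<lambda>_. 0, gk q Q (Suc (length \<alpha>))}" "\<And>x. (A has_real_derivative A' x) (at x)"
    using fam_deriv[OF j5 AB(1)] by blast
  obtain B' where B': "B' \<in> {\<lambda>_. 0, gk q Q (Suc (length \<alpha>))}" "\<And>x. (B has_real_derivative B' x) (at x)"
    using fam_deriv[OF j5 AB(2)] by blast
  show ?case
    unfolding foldr.simps o_apply AB(3) partial_form(1)[OF A'(2) B'(2)]
    using A'(1) B'(1) by (intro exI[of _ "if i = 1 then A' else (\<lambda>_. 0)"] exI[of _ "if i = 4 then B' else (\<lambda>_. 0)"]) auto
qed

lemma iter_rep: "n \<le> 6 \<Longrightarrow> foldr partial (replicate n 1) (\<lambda>z::real^4. gk q Q 0 (z$1) + gk q Q 0 (z$4))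
   = (\<lambda>z. gk q Q n (z$1) + (if n = 0 then gk q Q 0 else (\<lambda>_. 0)) (z$4))"
proof (induction n)
  case 0
  then show ?case by simp
next
  case (Suc n)
  have n5: "n \<le> 5" using Suc.prems by simp
  have dA: "\<And>x. (gk q Q n has_real_derivative gk q Q (Suc n) x) (at x)" using gk_deriv[OF n5] .
  have dB: "\<And>x. ((if n = 0 then gk q Q 0 else (\<lambda>_. 0)) has_real_derivative
      (if n = 0 then gk q Q 1 else (\<lambda>_. 0)) x) (at x)"
    using gk_deriv[of 0] by auto
  show ?case using Suc by (simp add: partial_form(1)[OF dA dB])
qed

end




lemma abs_sin_diff_le: "\<bar>sin a - sin b\<bar> \<le> \<bar>a - b\<bar>" for a b :: real
proof -
  have "\<bar>sin a - sin b\<bar> = 2 * \<bar>sin ((a - b) / 2)\<bar> * \<bar>cos ((a + b) / 2)\<bar>"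
    by (simp add: sin_diff_sin abs_mult)
  also have "\<dots> \<le> 2 * \<bar>sin ((a - b) / 2)\<bar>"
    by (intro mult_left_le) (auto simp: abs_cos_le_one)
  also have "\<dots> \<le> 2 * \<bar>(a - b) / 2\<bar>" using abs_sin_x_le_abs_x[of "(a-b)/2"] by simp
  finally show ?thesis by simp
qed

lemma abs_sin_diff_le2: "\<bar>sin a - sin b\<bar> \<le> 2" for a b :: real
  using abs_sin_le_one[of a] abs_sin_le_one[of b] by linarith

lemma qpow:
  fixes q lam :: real assumes "0 < q" "lam > 0"
  shows "(((1/q) powr (1/lam)) ^ k) powr (-lam) = q ^ k"
proof -
  have "((1/q) powr (1/lam)) ^ k = ((1/q) powr (1/lam)) powr real k"
    using assms by (simp add: powr_realpow)
  also have "\<dots> = (1/q) powr (real k / lam)" by (simp add: powr_powr)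
  finally have "(((1/q) powr (1/lam)) ^ k) powr (-lam) = ((1/q) powr (real k / lam)) powr (-lam)" by simp
  also have "\<dots> = (1/q) powr (- real k)" using assms by (simp add: powr_powr)
  also have "\<dots> = q powr real k" using assms by (simp add: powr_minus_divide powr_divide)
  also have "\<dots> = q ^ k" using assms by (simp add: powr_realpow)
  finally show ?thesis .
qed

lemma logholder:
  fixes q lam l2 :: real and Q :: "nat \<Rightarrow> nat"
  assumes q0: "0 < q" and q1: "q < 1/3" and lam: "lam > 1" and l2: "0 < l2"
    and Qup: "\<forall>n\<ge>1. real (Q n) \<le> l2 * exp (((1/q) powr (1/lam)) ^ n)"
  shows "\<exists>C0 h0. C0 > 0 \<and> 0 < h0 \<and> h0 < 1 \<and> (\<forall>x t. 0 < \<bar>t\<bar> \<and> \<bar>t\<bar> \<le> h0 \<longrightarrow>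
     \<bar>(\<Sum>n. q ^ Suc n * sin (pi * real (Q (Suc n)) * (x + t))) - (\<Sum>n. q ^ Suc n * sin (pi * real (Q (Suc n)) * x))\<bar>
       \<le> C0 * (- ln \<bar>t\<bar>) powr (- lam))"
proof -
  define \<Theta> where "\<Theta> = (1/q) powr (1/lam)"
  have "((\<lambda>L::real. L powr lam * exp (-L/2)) \<longlongrightarrow> 0) at_top" using lam by real_asymp
  then have "eventually (\<lambda>L::real. L powr lam * exp (-L/2) < 1) at_top"
    by (rule order_tendstoD) simp
  then obtain L1 where L1: "\<And>L. L \<ge> L1 \<Longrightarrow> L powr lam * exp (-L/2) < 1"
    by (auto simp: eventually_at_top_linorder)
  define L0 where "L0 = max L1 1"
  define h0 where "h0 = exp (- L0)"
  define C0 where "C0 = pi * l2 + 3 * 2 powr lam"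
  have sumq: "summable (\<lambda>n. c * q ^ Suc n)" for c
    using q0 q1 by (intro summable_mult) (simp add: summable_geometric)
  have "\<bar>(\<Sum>n. q ^ Suc n * sin (pi * real (Q (Suc n)) * (x + t))) - (\<Sum>n. q ^ Suc n * sin (pi * real (Q (Suc n)) * x))\<bar>
       \<le> C0 * (- ln \<bar>t\<bar>) powr (- lam)" if t0: "0 < \<bar>t\<bar>" and th: "\<bar>t\<bar> \<le> h0" for x t
  proof -
    define L where "L = - ln \<bar>t\<bar>"
    have tL: "\<bar>t\<bar> = exp (- L)" using t0 by (simp add: L_def)
    have "ln \<bar>t\<bar> \<le> ln (exp (- L0))" using th t0 unfolding h0_def by (subst ln_le_cancel_iff) auto
    then have LL0: "L \<ge> L0" unfolding L_def by simp
    then have L1': "L \<ge> 1" "L \<ge> L1" by (auto simp: L0_def)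
    define eps where "eps = (L/2) powr (- lam)"
    have eps0: "eps > 0" using L1' by (simp add: eps_def)
    obtain n0 where "q ^ n0 < eps" using real_arch_pow_inv[OF eps0, of q] q1 by auto
    then have ex: "\<exists>m. q ^ Suc m < eps"
    proof -
      have "q ^ Suc n0 \<le> q ^ n0" by (rule power_decreasing) (use q0 q1 in auto)
      then show ?thesis using \<open>q ^ n0 < eps\<close> by (intro exI[of _ n0]) auto
    qed
    define m0 where "m0 = (LEAST m. q ^ Suc m < eps)"
    have m0: "q ^ Suc m0 < eps" unfolding m0_def using LeastI_ex[OF ex] .
    define d where "d n = q ^ Suc n * (sin (pi * real (Q (Suc n)) * (x + t)) - sin (pi * real (Q (Suc n)) * x))" for n
    define b where "b n = (pi * l2 * exp (- L / 2)) * q ^ Suc n + (if m0 \<le> n then 2 * q ^ Suc n else 0)" for n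
    have db: "\<bar>d n\<bar> \<le> b n" for n
    proof (cases "\<Theta> ^ Suc n \<le> L / 2")
      case True
      have "\<bar>d n\<bar> = q ^ Suc n * \<bar>sin (pi * real (Q (Suc n)) * (x + t)) - sin (pi * real (Q (Suc n)) * x)\<bar>"
        using q0 by (simp add: d_def abs_mult)
      also have "\<dots> \<le> q ^ Suc n * (pi * real (Q (Suc n)) * \<bar>t\<bar>)"
        using abs_sin_diff_le[of "pi * real (Q (Suc n)) * (x + t)" "pi * real (Q (Suc n)) * x"] q0
        by (intro mult_left_mono) (auto simp: algebra_simps abs_mult)
      also have "\<dots> \<le> q ^ Suc n * (pi * (l2 * exp (\<Theta> ^ Suc n)) * exp (- L))"
        using Qup[rule_format, of "Suc n"] q0 tL by (intro mult_left_mono) (auto simp: \<Theta>_def)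
      also have "\<dots> \<le> q ^ Suc n * (pi * (l2 * exp (L / 2)) * exp (- L))"
        using True q0 l2 by (intro mult_left_mono mult_right_mono) auto
      also have "\<dots> = (pi * l2 * exp (- L / 2)) * q ^ Suc n"
      proof -
        have ee: "exp (- L) * exp (L / 2) = exp (- (L / 2))" by (simp add: exp_add[symmetric])
        show ?thesis using ee by (simp add: mult_ac)
      qed
      also have "\<dots> \<le> b n" using q0 by (simp add: b_def)
      finally show ?thesis .
    next
      case False
      have "q ^ Suc n = (\<Theta> ^ Suc n) powr (- lam)" using qpow[of q lam "Suc n"] q0 lam by (simp add: \<Theta>_def)
      also have "\<dots> < (L / 2) powr (- lam)"
        using False lam L1' by (intro powr_less_mono2_neg) auto
      finally have "q ^ Suc n < eps" by (simp add: eps_def)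
      then have "m0 \<le> n" unfolding m0_def by (rule Least_le)
      have "\<bar>d n\<bar> = q ^ Suc n * \<bar>sin (pi * real (Q (Suc n)) * (x + t)) - sin (pi * real (Q (Suc n)) * x)\<bar>"
        using q0 by (simp add: d_def abs_mult)
      also have "\<dots> \<le> q ^ Suc n * 2" using q0 abs_sin_diff_le2 by (intro mult_left_mono) auto
      also have "\<dots> \<le> b n" using q0 l2 \<open>m0 \<le> n\<close> by (simp add: b_def)
      finally show ?thesis .
    qed
    have s1: "(\<lambda>n. (pi * l2 * exp (- L / 2)) * q ^ Suc n) sums ((pi * l2 * exp (- L / 2)) * (q / (1 - q)))"
    proof -
      have "(\<lambda>n. q * q ^ n) sums (q * (1 / (1 - q)))"
        using q0 q1 by (intro sums_mult geometric_sums) auto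
      then show ?thesis by (intro sums_mult) simp
    qed
    have s2: "(\<lambda>n. if m0 \<le> n then 2 * q ^ Suc n else 0) sums (2 * q ^ Suc m0 * (1 / (1 - q)))"
    proof -
      have "(\<lambda>i. 2 * q ^ Suc m0 * q ^ i) sums (2 * q ^ Suc m0 * (1 / (1 - q)))"
        using q0 q1 by (intro sums_mult geometric_sums) auto
      moreover have "(\<lambda>i. (\<lambda>n. if m0 \<le> n then 2 * q ^ Suc n else 0) (i + m0)) = (\<lambda>i. 2 * q ^ Suc m0 * q ^ i)"
        by (simp add: power_add mult_ac)
      ultimately have "(\<lambda>i. (\<lambda>n. if m0 \<le> n then 2 * q ^ Suc n else 0) (i + m0)) sums (2 * q ^ Suc m0 * (1 / (1 - q)))"
        by simp
      then have "(\<lambda>n. if m0 \<le> n then 2 * q ^ Suc n else 0) sums (2 * q ^ Suc m0 * (1 / (1 - q)) + (\<Sum>i<m0. (\<lambda>n. if m0 \<le> n then 2 * q ^ Suc n else 0) i))"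
        by (rule sums_iff_shift[THEN iffD1])
      moreover have "(\<Sum>i<m0. (\<lambda>n. if m0 \<le> n then 2 * q ^ Suc n else (0::real)) i) = 0" by simp
      ultimately show ?thesis by simp
    qed
    have bs: "b sums ((pi * l2 * exp (- L / 2)) * (q / (1 - q)) + 2 * q ^ Suc m0 * (1 / (1 - q)))"
      unfolding b_def[abs_def] by (intro sums_add s1 s2)
    have sd: "summable (\<lambda>n. \<bar>d n\<bar>)"
      by (rule summable_comparison_test'[OF sums_summable[OF bs]]) (use db in auto)
    have sA: "summable (\<lambda>n. q ^ Suc n * sin (pi * real (Q (Suc n)) * y))" for y
      by (rule summable_comparison_test'[OF sumq[of 1]]) (use q0 in \<open>auto simp: abs_mult\<close>)
    have "(\<Sum>n. q ^ Suc n * sin (pi * real (Q (Suc n)) * (x + t))) - (\<Sum>n. q ^ Suc n * sin (pi * real (Q (Suc n)) * x))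
       = suminf d"
      unfolding d_def by (subst suminf_diff[OF sA sA]) (simp add: right_diff_distrib)
    then have "\<bar>(\<Sum>n. q ^ Suc n * sin (pi * real (Q (Suc n)) * (x + t))) - (\<Sum>n. q ^ Suc n * sin (pi * real (Q (Suc n)) * x))\<bar>
       \<le> (\<Sum>n. \<bar>d n\<bar>)" using summable_rabs[OF sd] by simp
    also have "\<dots> \<le> suminf b" by (rule suminf_le[OF db sd sums_summable[OF bs]])
    also have "\<dots> = (pi * l2 * exp (- L / 2)) * (q / (1 - q)) + 2 * q ^ Suc m0 * (1 / (1 - q))"
      using bs by (simp add: sums_iff)
    also have "\<dots> \<le> (pi * l2 * L powr (- lam)) * 1 + 2 * eps * (3 / 2)"
    proof (rule add_mono)
      have "L powr lam * exp (-L/2) < 1" using L1' L1 by auto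
      then have "exp (-L/2) \<le> 1 / L powr lam" using L1' by (simp add: field_simps)
      then have "pi * l2 * exp (-L/2) \<le> pi * l2 * (1 / L powr lam)"
        using l2 by (intro mult_left_mono) auto
      then have E: "pi * l2 * exp (- L / 2) \<le> pi * l2 * L powr - lam"
        by (simp add: powr_minus_divide)
      show "pi * l2 * exp (- L / 2) * (q / (1 - q)) \<le> pi * l2 * L powr - lam * 1"
        by (rule mult_mono[OF E]) (use q0 q1 l2 in \<open>auto simp: field_simps\<close>)
      show "2 * q ^ Suc m0 * (1 / (1 - q)) \<le> 2 * eps * (3 / 2)"
        by (rule mult_mono) (use q0 q1 m0 eps0 in \<open>auto simp: field_simps\<close>)
    qed
    also have "eps = 2 powr lam * L powr (- lam)"
      using L1' by (simp add: eps_def powr_divide powr_minus_divide field_simps)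
    finally show ?thesis unfolding C0_def L_def by (simp add: algebra_simps)
  qed
  moreover have "C0 > 0" using l2 by (simp add: C0_def add_pos_nonneg)
  moreover have "0 < h0" "h0 < 1" by (auto simp: h0_def L0_def)
  ultimately show ?thesis by blast
qed



lemma growG:
  fixes \<Theta> q b :: real assumes "\<Theta> > 1" "q > 0" "b > 0"
  shows "filterlim (\<lambda>n. exp (b * \<Theta> ^ Suc n) * q ^ Suc n) at_top sequentially"
proof -
  define s where "s = ln \<Theta>"
  define lq where "lq = ln q"
  have s0: "s > 0" using assms by (simp add: s_def)
  have "filterlim (\<lambda>y::real. exp (b * exp (s * (y + 1))) * exp (lq * (y + 1))) at_top at_top"
    using s0 assms by real_asymp
  from filterlim_compose[OF this filterlim_real_sequentially]
  have "filterlim (\<lambda>n. exp (b * exp (s * (real n + 1))) * exp (lq * (real n + 1))) at_top sequentially"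
    by (simp add: o_def)
  moreover have "exp (s * (real n + 1)) = \<Theta> ^ Suc n" "exp (lq * (real n + 1)) = q ^ Suc n" for n
    using exp_of_nat_mult[of "Suc n" s] exp_of_nat_mult[of "Suc n" lq] assms
    by (simp_all add: s_def lq_def algebra_simps)
  ultimately show ?thesis by simp
qed

lemma sin_shift_int: "sin (y + 2 * pi * of_int m) = sin y"
  by (simp add: sin_add)

lemma main_term:
  fixes th :: real
  defines "e \<equiv> (if \<bar>sin th\<bar> \<ge> 1/2 then 5 else
      if \<bar>sin (th + pi / 5) - sin th\<bar> \<ge> \<bar>sin (th - pi / 5) - sin th\<bar> then 1 else -1) :: int"
  shows "\<bar>sin (th + pi * of_int e / 5) - sin th\<bar> \<ge> sin (pi/5) / 2" "e \<in> {5, 1, -1}"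
proof -
  have sp: "0 < sin (pi/5)" "sin (pi/5) \<le> 1" by (auto intro: sin_gt_zero)
  show "e \<in> {5, 1, -1}" unfolding e_def by auto
  show "\<bar>sin (th + pi * of_int e / 5) - sin th\<bar> \<ge> sin (pi/5) / 2"
  proof (cases "\<bar>sin th\<bar> \<ge> 1/2")
    case True
    then have "e = 5" by (simp add: e_def)
    then have "\<bar>sin (th + pi * of_int e / 5) - sin th\<bar> = 2 * \<bar>sin th\<bar>" by (simp add: abs_mult)
    then show ?thesis using True sp by linarith
  next
    case False
    have "sin th ^ 2 + cos th ^ 2 = 1" by simp
    moreover have "sin th ^ 2 < 1/4"
    proof -
      have "\<bar>sin th\<bar> ^ 2 < (1/2) ^ 2" by (rule power_strict_mono) (use False in auto)
      then show ?thesis by (simp add: power2_abs power_divide)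
    qed
    ultimately have c2: "cos th ^ 2 > 1/4" by linarith
    have c: "\<bar>cos th\<bar> > 1/2"
    proof (rule ccontr)
      assume "\<not> \<bar>cos th\<bar> > 1/2"
      then have "\<bar>cos th\<bar> ^ 2 \<le> (1/2) ^ 2" by (intro power_mono) auto
      then show False using c2 by (simp add: power2_abs power_divide)
    qed
    have diff: "(sin (th + pi / 5) - sin th) - (sin (th - pi / 5) - sin th) = 2 * cos th * sin (pi / 5)"
      by (simp add: sin_add sin_diff)
    have "2 * \<bar>cos th\<bar> * sin (pi/5) = \<bar>(sin (th + pi / 5) - sin th) - (sin (th - pi / 5) - sin th)\<bar>"
      using diff sp by (simp add: abs_mult)
    also have "\<dots> \<le> \<bar>sin (th + pi / 5) - sin th\<bar> + \<bar>sin (th - pi / 5) - sin th\<bar>"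
      by (rule abs_triangle_ineq4)
    finally have s1: "\<bar>sin (th + pi / 5) - sin th\<bar> + \<bar>sin (th - pi / 5) - sin th\<bar> \<ge> 2 * \<bar>cos th\<bar> * sin (pi/5)" .
    have "1 * sin (pi/5) \<le> (2 * \<bar>cos th\<bar>) * sin (pi/5)" using c sp by (intro mult_right_mono) auto
    then have "2 * \<bar>cos th\<bar> * sin (pi/5) \<ge> sin (pi/5)" by simp
    with s1 have "\<bar>sin (th + pi / 5) - sin th\<bar> + \<bar>sin (th - pi / 5) - sin th\<bar> \<ge> sin (pi/5)" by linarith
    then have "max \<bar>sin (th + pi / 5) - sin th\<bar> \<bar>sin (th - pi / 5) - sin th\<bar> \<ge> sin (pi/5) / 2"
      by linarith
    then show ?thesis using False unfolding e_def by (auto simp: max_def split: if_splits)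
  qed
qed


lemma nowhere:
  fixes q lam l1 l2 a x :: real and Q :: "nat \<Rightarrow> nat"
  assumes q0: "0 < q" and q1: "q < 1/3" and lam: "lam > 1"
    and Qpos: "\<forall>n\<ge>1. Q n > 0 \<and> 10 dvd Q n"
    and Qdvd: "\<forall>n\<ge>1. Q n dvd Q (Suc n) \<and> 10 dvd (Q (Suc n) div Q n)"
    and l1: "0 < l1" and l12: "l1 \<le> l2"
    and Qb: "\<forall>n\<ge>1. l1 * exp (((1/q) powr (1/lam)) ^ n) \<le> real (Q n)
                 \<and> real (Q n) \<le> l2 * exp (((1/q) powr (1/lam)) ^ n)"
    and a0: "0 < a" and a1: "a < 1"
  shows "\<exists>\<upsilon>::nat \<Rightarrow> real. (\<forall>m. \<upsilon> m \<noteq> 0) \<and> \<upsilon> \<longlonglongrightarrow> 0 \<and>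
     filterlim (\<lambda>m. \<bar>(\<Sum>n. q ^ Suc n * sin (pi * real (Q (Suc n)) * (x + \<upsilon> m)))
                     - (\<Sum>n. q ^ Suc n * sin (pi * real (Q (Suc n)) * x))\<bar> / \<bar>\<upsilon> m\<bar> powr a) at_top sequentially"
proof -
  define \<Theta> where "\<Theta> = (1/q) powr (1/lam)"
  have \<Theta>1: "\<Theta> > 1" unfolding \<Theta>_def using q0 q1 lam by (intro gr_one_powr) auto
  have Qp: "Q (Suc n) > 0" for n using Qpos by auto
  have QR: "real (Q (Suc n)) \<ge> 1" for n using Qp[of n] by simp
  have Qlow: "l1 * exp (\<Theta> ^ Suc n) \<le> real (Q (Suc n))" for n using Qb unfolding \<Theta>_def by auto
  have Qup: "real (Q n) \<le> l2 * exp (\<Theta> ^ n)" if "n \<ge> 1" for n using Qb that unfolding \<Theta>_def by auto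
  have chain: "10 * Q (Suc n) dvd Q (Suc n + Suc d)" for n d
  proof (induction d)
    case 0
    have "Q (Suc n) dvd Q (Suc (Suc n))" "10 dvd (Q (Suc (Suc n)) div Q (Suc n))" using Qdvd by auto
    then obtain r where r: "Q (Suc (Suc n)) = Q (Suc n) * r" "10 dvd r" using Qp[of n] by (auto elim!: dvdE)
    then show ?case by (simp add: mult.commute mult_dvd_mono)
  next
    case (Suc d)
    have "Q (Suc n + Suc d) dvd Q (Suc (Suc n + Suc d))" using Qdvd by auto
    then show ?case using Suc.IH by (simp add: dvd_trans)
  qed
  have mono: "Q (Suc k) \<le> Q (Suc n)" if "k \<le> n" for k n
  proof (cases "k = n")
    case False
    then have "k < n" using that by simp
    then obtain d where "n = Suc (k + d)" by (auto dest: less_imp_Suc_add)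
    then have "n = k + Suc d" by simp
    then have "Q (Suc k) dvd Q (Suc n)" using chain[of k d] by (simp add: dvd_mult_right)
    then show ?thesis using Qp[of n] by (simp add: dvd_imp_le)
  qed simp
  define th where "th n = pi * real (Q (Suc n)) * x" for n
  define e where "e n = (if \<bar>sin (th n)\<bar> \<ge> 1/2 then 5 else
      if \<bar>sin (th n + pi / 5) - sin (th n)\<bar> \<ge> \<bar>sin (th n - pi / 5) - sin (th n)\<bar> then 1 else -1 :: int)" for n
  define c0 where "c0 = sin (pi/5) / 2"
  have c0: "c0 > 0" unfolding c0_def by (auto intro: sin_gt_zero)
  have eM: "\<bar>sin (th n + pi * of_int (e n) / 5) - sin (th n)\<bar> \<ge> c0" "e n \<in> {5, 1, -1}" for n
    using main_term[of "th n"] unfolding e_def c0_def by auto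
  define \<upsilon> where "\<upsilon> n = of_int (e n) / (5 * real (Q (Suc n)))" for n
  have \<upsilon>0: "\<upsilon> n \<noteq> 0" for n using eM(2)[of n] Qp[of n] by (auto simp: \<upsilon>_def)
  have \<upsilon>le: "\<bar>\<upsilon> n\<bar> \<le> 1 / real (Q (Suc n))" for n
  proof -
    have R: "real (Q (Suc n)) > 0" using Qp[of n] by simp
    then show ?thesis using eM(2)[of n] by (auto simp: \<upsilon>_def abs_div field_simps)
  qed
  define P where "P y = (\<Sum>n. q ^ Suc n * sin (pi * real (Q (Suc n)) * y))" for y
  define d where "d n k = q ^ Suc k * (sin (pi * real (Q (Suc k)) * (x + \<upsilon> n)) - sin (pi * real (Q (Suc k)) * x))" for n k
  have sumq: "summable (\<lambda>n. c * q ^ Suc n)" for c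
    using q0 q1 by (intro summable_mult) (simp add: summable_geometric)
  have sA: "summable (\<lambda>n. q ^ Suc n * sin (pi * real (Q (Suc n)) * y))" for y
    by (rule summable_comparison_test'[OF sumq[of 1]]) (use q0 in \<open>auto simp: abs_mult\<close>)
  have dz: "d n k = 0" if "k \<notin> {..<Suc n}" for n k
  proof -
    have "n < k" using that by simp
    then obtain j where "k = Suc (n + j)" by (auto dest: less_imp_Suc_add)
    then have kj: "k = n + Suc j" by simp
    obtain r where r: "Q (Suc k) = 10 * Q (Suc n) * r" using chain[of n j] kj by (auto elim!: dvdE)
    have "pi * real (Q (Suc k)) * (x + \<upsilon> n) = pi * real (Q (Suc k)) * x + 2 * pi * of_int (int r * e n)"
      using Qp[of n] unfolding r \<upsilon>_def by (simp add: field_simps)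
    then show ?thesis unfolding d_def by (simp only: sin_shift_int) simp
  qed
  have dn: "d n n = q ^ Suc n * (sin (th n + pi * of_int (e n) / 5) - sin (th n))" for n
  proof -
    have "pi * real (Q (Suc n)) * (x + \<upsilon> n) = th n + pi * of_int (e n) / 5"
      using Qp[of n] unfolding th_def \<upsilon>_def by (simp add: field_simps)
    then show ?thesis unfolding d_def th_def by simp
  qed
  have Dsum: "P (x + \<upsilon> n) - P x = (\<Sum>k<n. d n k) + d n n" for n
  proof -
    have "P (x + \<upsilon> n) - P x = suminf (d n)"
      unfolding P_def d_def by (subst suminf_diff[OF sA sA]) (simp add: right_diff_distrib)
    also have "\<dots> = (\<Sum>k<Suc n. d n k)" by (rule suminf_finite) (use dz in auto)
    finally show ?thesis by simp
  qed
  have geo1: "(\<Sum>k<n. q ^ Suc k) \<le> 1" for n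
  proof -
    have "(\<lambda>k. q * q ^ k) sums (q * (1 / (1 - q)))" using q0 q1 by (intro sums_mult geometric_sums) auto
    then have "(\<Sum>k<n. q ^ Suc k) \<le> q * (1 / (1 - q))"
      using q0 by (intro sum_le_suminf[THEN order_trans]) (auto simp: sums_iff)
    also have "\<dots> \<le> 1" using q0 q1 by (simp add: field_simps)
    finally show ?thesis .
  qed
  have Rb: "\<bar>\<Sum>k<n. d n k\<bar> \<le> pi * real (Q n) / real (Q (Suc n))" if "n \<ge> 1" for n
  proof -
    have "\<bar>d n k\<bar> \<le> q ^ Suc k * (pi * real (Q n) / real (Q (Suc n)))" if "k < n" for k
    proof -
      have "\<bar>d n k\<bar> = q ^ Suc k * \<bar>sin (pi * real (Q (Suc k)) * (x + \<upsilon> n)) - sin (pi * real (Q (Suc k)) * x)\<bar>"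
        using q0 by (simp add: d_def abs_mult)
      also have "\<dots> \<le> q ^ Suc k * (pi * real (Q (Suc k)) * \<bar>\<upsilon> n\<bar>)"
        using abs_sin_diff_le[of "pi * real (Q (Suc k)) * (x + \<upsilon> n)" "pi * real (Q (Suc k)) * x"] q0
        by (intro mult_left_mono) (auto simp: algebra_simps abs_mult)
      also have "\<dots> \<le> q ^ Suc k * (pi * real (Q n) * (1 / real (Q (Suc n))))"
      proof -
        obtain n' where n': "n = Suc n'" using \<open>n \<ge> 1\<close> by (cases n) auto
        have "Q (Suc k) \<le> Q n" using mono[of k n'] that n' by simp
        then show ?thesis using q0 \<upsilon>le[of n]
          by (intro mult_left_mono mult_mono) auto
      qed
      finally show ?thesis by simp
    qed
    then have "\<bar>\<Sum>k<n. d n k\<bar> \<le> (\<Sum>k<n. q ^ Suc k * (pi * real (Q n) / real (Q (Suc n))))"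
      by (intro order_trans[OF sum_abs] sum_mono) auto
    also have "\<dots> = (\<Sum>k<n. q ^ Suc k) * (pi * real (Q n) / real (Q (Suc n)))" by (rule sum_distrib_right[symmetric])
    also have "\<dots> \<le> 1 * (pi * real (Q n) / real (Q (Suc n)))"
      using geo1[of n] by (intro mult_right_mono) auto
    finally show ?thesis by simp
  qed
  define b where "b = 1 - 1 / \<Theta>"
  have b0: "b > 0" using \<Theta>1 by (simp add: b_def)
  have bT: "exp (\<Theta> ^ n) * exp (b * \<Theta> ^ Suc n) = exp (\<Theta> ^ Suc n)" for n
  proof -
    have "\<Theta> ^ n + b * \<Theta> ^ Suc n = \<Theta> ^ Suc n" using \<Theta>1 by (simp add: b_def field_simps)
    then show ?thesis by (simp add: exp_add[symmetric])
  qed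
  define K where "K = 2 * pi * l2 / (l1 * c0)"
  have E2: "eventually (\<lambda>n. K \<le> exp (b * \<Theta> ^ Suc n) * q ^ Suc n) sequentially"
    using growG[OF \<Theta>1 q0 b0] by (simp add: filterlim_at_top)
  have lowb: "\<bar>P (x + \<upsilon> n) - P x\<bar> \<ge> (c0 / 2) * q ^ Suc n"
    if n1: "n \<ge> 1" and EK: "K \<le> exp (b * \<Theta> ^ Suc n) * q ^ Suc n" for n
  proof -
    have "pi * real (Q n) \<le> pi * (l2 * exp (\<Theta> ^ n))" using Qup[OF n1] by simp
    also have "\<dots> = (c0 / 2) * l1 * exp (\<Theta> ^ n) * K"
      using l1 c0 by (simp add: K_def field_simps)
    also have "\<dots> \<le> (c0 / 2) * l1 * exp (\<Theta> ^ n) * (exp (b * \<Theta> ^ Suc n) * q ^ Suc n)"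
      using EK l1 c0 by (intro mult_left_mono) auto
    also have "\<dots> = (c0 / 2) * q ^ Suc n * (l1 * exp (\<Theta> ^ Suc n))"
      using bT[of n] by (simp add: mult_ac)
    also have "\<dots> \<le> (c0 / 2) * q ^ Suc n * real (Q (Suc n))"
      using Qlow[of n] c0 q0 by (intro mult_left_mono) auto
    finally have "pi * real (Q n) / real (Q (Suc n)) \<le> (c0 / 2) * q ^ Suc n"
      using Qp[of n] by (simp add: divide_le_eq)
    then have "\<bar>\<Sum>k<n. d n k\<bar> \<le> (c0 / 2) * q ^ Suc n" using Rb[OF n1] by linarith
    moreover have "\<bar>d n n\<bar> \<ge> c0 * q ^ Suc n"
      unfolding dn using eM(1)[of n] q0 by (simp add: abs_mult mult.commute mult_right_mono)
    ultimately show ?thesis unfolding Dsum by linarith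
  qed
  define K2 where "K2 = (c0 / 2) * l1 powr a"
  have K2: "K2 > 0" using c0 l1 by (simp add: K2_def)
  have ratio: "\<bar>P (x + \<upsilon> n) - P x\<bar> / \<bar>\<upsilon> n\<bar> powr a \<ge> K2 * (exp (a * \<Theta> ^ Suc n) * q ^ Suc n)"
    if n1: "n \<ge> 1" and EK: "K \<le> exp (b * \<Theta> ^ Suc n) * q ^ Suc n" for n
  proof -
    have up: "\<bar>\<upsilon> n\<bar> powr a \<le> 1 / real (Q (Suc n)) powr a"
    proof -
      have "\<bar>\<upsilon> n\<bar> powr a \<le> (1 / real (Q (Suc n))) powr a"
        using \<upsilon>le[of n] a0 by (intro powr_mono2) auto
      then show ?thesis using Qp[of n] by (simp add: powr_divide)
    qed
    have upos: "0 < \<bar>\<upsilon> n\<bar> powr a" using \<upsilon>0[of n] by simp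
    have "K2 * (exp (a * \<Theta> ^ Suc n) * q ^ Suc n) = (c0 / 2) * q ^ Suc n * (l1 * exp (\<Theta> ^ Suc n)) powr a"
      using l1 by (simp add: K2_def powr_mult exp_powr_real mult_ac)
    also have "\<dots> \<le> (c0 / 2) * q ^ Suc n * real (Q (Suc n)) powr a"
      using Qlow[of n] c0 q0 l1 a0 by (intro mult_left_mono powr_mono2) auto
    also have "\<dots> = ((c0 / 2) * q ^ Suc n) / (1 / real (Q (Suc n)) powr a)" by simp
    also have "\<dots> \<le> ((c0 / 2) * q ^ Suc n) / \<bar>\<upsilon> n\<bar> powr a"
    proof (rule divide_left_mono)
      have "0 < real (Q (Suc n)) powr a" using Qp[of n] by simp
      then show "0 < 1 / real (Q (Suc n)) powr a * \<bar>\<upsilon> n\<bar> powr a" using upos by simp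
    qed (use up c0 q0 in auto)
    also have "\<dots> \<le> \<bar>P (x + \<upsilon> n) - P x\<bar> / \<bar>\<upsilon> n\<bar> powr a"
      using lowb[OF n1 EK] upos by (intro divide_right_mono) auto
    finally show ?thesis .
  qed
  have lim1: "filterlim (\<lambda>n. \<bar>P (x + \<upsilon> n) - P x\<bar> / \<bar>\<upsilon> n\<bar> powr a) at_top sequentially"
  proof (rule filterlim_at_top_mono)
    show "filterlim (\<lambda>n. K2 * (exp (a * \<Theta> ^ Suc n) * q ^ Suc n)) at_top sequentially"
      by (rule filterlim_tendsto_pos_mult_at_top[OF tendsto_const K2 growG[OF \<Theta>1 q0 a0]])
    show "eventually (\<lambda>n. K2 * (exp (a * \<Theta> ^ Suc n) * q ^ Suc n) \<le> \<bar>P (x + \<upsilon> n) - P x\<bar> / \<bar>\<upsilon> n\<bar> powr a) sequentially"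
      using E2 eventually_ge_at_top[of 1] by eventually_elim (use ratio in auto)
  qed
  have lim2: "\<upsilon> \<longlonglongrightarrow> 0"
  proof (rule Lim_null_comparison)
    have A: "filterlim (\<lambda>n. l1 * (exp (1 * \<Theta> ^ Suc n) * q ^ Suc n)) at_top sequentially"
      by (rule filterlim_tendsto_pos_mult_at_top[OF tendsto_const l1 growG[OF \<Theta>1 q0]]) simp
    have B: "l1 * (exp (1 * \<Theta> ^ Suc n) * q ^ Suc n) \<le> real (Q (Suc n))" for n
    proof -
      have "q ^ Suc n \<le> 1" using q0 q1 by (intro power_le_one) auto
      then have "l1 * (exp (1 * \<Theta> ^ Suc n) * q ^ Suc n) \<le> l1 * (exp (\<Theta> ^ Suc n) * 1)"
        using l1 by (intro mult_left_mono) auto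
      then show ?thesis using Qlow[of n] by simp
    qed
    have "filterlim (\<lambda>n. real (Q (Suc n))) at_top sequentially"
    proof (rule filterlim_at_top_mono[OF A])
      show "eventually (\<lambda>n. l1 * (exp (1 * \<Theta> ^ Suc n) * q ^ Suc n) \<le> real (Q (Suc n))) sequentially"
        using B by (intro always_eventually) auto
    qed
    then show "(\<lambda>n. inverse (real (Q (Suc n)))) \<longlonglongrightarrow> 0" by (rule tendsto_inverse_0_at_top)
    show "eventually (\<lambda>n. norm (\<upsilon> n) \<le> inverse (real (Q (Suc n)))) sequentially"
      using \<upsilon>le by (simp add: inverse_eq_divide)
  qed
  show ?thesis
  proof (intro exI[of _ \<upsilon>] conjI allI \<upsilon>0 lim2)
    show "filterlim (\<lambda>m. \<bar>(\<Sum>n. q ^ Suc n * sin (pi * real (Q (Suc n)) * (x + \<upsilon> m)))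
                     - (\<Sum>n. q ^ Suc n * sin (pi * real (Q (Suc n)) * x))\<bar> / \<bar>\<upsilon> m\<bar> powr a) at_top sequentially"
      using lim1 unfolding P_def .
  qed
qed


theorem mainTheorem7:
  fixes q lam l1 l2 :: real and Q :: "nat \<Rightarrow> nat"
  assumes "0 < q" "q < 1/3" "lam > 1"
    and "\<forall>n\<ge>1. Q n > 0 \<and> 10 dvd Q n"
    and "\<forall>n\<ge>1. Q n dvd Q (Suc n) \<and> 10 dvd (Q (Suc n) div Q n)"
    and "0 < l1" "l1 \<le> l2"
    and "\<forall>n\<ge>1. l1 * exp (((1/q) powr (1/lam)) ^ n) \<le> real (Q n)
                 \<and> real (Q n) \<le> l2 * exp (((1/q) powr (1/lam)) ^ n)"
  defines "PH \<equiv> (\<lambda>z::real^4.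
      (\<Sum>n. q ^ (Suc n) / real (Q (Suc n)) ^ 6 * sin (pi * real (Q (Suc n)) * z $ 1))
    + (\<Sum>n. q ^ (Suc n) / real (Q (Suc n)) ^ 6 * sin (pi * real (Q (Suc n)) * z $ 4)))"
  and "P \<equiv> (\<lambda>x::real. \<Sum>n. q ^ (Suc n) * sin (pi * real (Q (Suc n)) * x))"
  shows "Ck 6 PH
    \<and> (\<exists>C h0. C > 0 \<and> 0 < h0 \<and> h0 < 1 \<and>
         (\<forall>\<alpha> z h. length \<alpha> = 6 \<and> 0 < infnorm h \<and> infnorm h \<le> h0 \<longrightarrow>
            \<bar>iter_partial \<alpha> PH (z + h) - iter_partial \<alpha> PH z\<bar>
              \<le> C * (- ln (infnorm h)) powr (- lam)))
    \<and> (\<forall>z. iter_partial [1,1,1,1,1,1] PH z = - (pi ^ 6) * P (z $ 1))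
    \<and> (\<forall>x a. 0 < a \<and> a < 1 \<longrightarrow>
         (\<exists>\<upsilon>::nat \<Rightarrow> real. (\<forall>m. \<upsilon> m \<noteq> 0) \<and> \<upsilon> \<longlonglongrightarrow> 0 \<and>
            filterlim (\<lambda>m. \<bar>P (x + \<upsilon> m) - P x\<bar> / \<bar>\<upsilon> m\<bar> powr a) at_top sequentially))"
proof -
  note q0 = assms(1) and q1 = assms(2) and lam = assms(3) and Qpos = assms(4)
  have PHe: "PH = (\<lambda>z::real^4. gk q Q 0 (z$1) + gk q Q 0 (z$4))"
    unfolding PH_def by (simp add: gk0[OF q0 q1 Qpos])
  have g6: "gk q Q 6 = (\<lambda>x. - (pi ^ 6) * P x)"
    unfolding P_def by (simp add: gk6[OF q0 q1 Qpos] fun_eq_iff)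
  have part1: "Ck 6 PH"
    unfolding PHe by (rule Ck_fam[OF q0 q1 Qpos, of 0]) auto
  have l2: "0 < l2" using assms(6,7) by simp
  have Qup: "\<forall>n\<ge>1. real (Q n) \<le> l2 * exp (((1/q) powr (1/lam)) ^ n)" using assms(8) by auto
  obtain C0 h0 where C0: "C0 > 0" "0 < h0" "h0 < 1"
    and hold: "\<And>x t. 0 < \<bar>t\<bar> \<Longrightarrow> \<bar>t\<bar> \<le> h0 \<Longrightarrow> \<bar>P (x + t) - P x\<bar> \<le> C0 * (- ln \<bar>t\<bar>) powr (- lam)"
    using logholder[OF q0 q1 lam l2 Qup] unfolding P_def by blast
  have comp: "\<bar>A (y + s) - A y\<bar> \<le> pi ^ 6 * C0 * (- ln N) powr (- lam)"
    if A: "A \<in> {\<lambda>_. 0, gk q Q 6}" and N: "0 < N" "N \<le> h0" and s: "\<bar>s\<bar> \<le> N" for A y s N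
  proof (cases "A = (\<lambda>_. 0)")
    case True
    then show ?thesis using C0 by simp
  next
    case False
    then have A6: "A = (\<lambda>x. - (pi ^ 6) * P x)" using A g6 by auto
    show ?thesis
    proof (cases "s = 0")
      case True
      then show ?thesis using A6 C0 by simp
    next
      case False
      then have s0: "0 < \<bar>s\<bar>" by simp
      have N1: "N < 1" using N C0 by simp
      have "\<bar>A (y + s) - A y\<bar> = pi ^ 6 * \<bar>P (y + s) - P y\<bar>"
        unfolding A6 by (simp add: abs_mult right_diff_distrib[symmetric])
      also have "\<dots> \<le> pi ^ 6 * (C0 * (- ln \<bar>s\<bar>) powr (- lam))"
        using hold[OF s0] s N by (intro mult_left_mono) auto
      also have "\<dots> \<le> pi ^ 6 * (C0 * (- ln N) powr (- lam))"
      proof (intro mult_left_mono powr_mono2')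
        have "ln N < 0" using N N1 by simp
        then show "0 < - ln N" by simp
        show "- ln N \<le> - ln \<bar>s\<bar>" using s s0 by simp
      qed (use lam C0 in auto)
      finally show ?thesis by simp
    qed
  qed
  have part2: "\<exists>C h0. C > 0 \<and> 0 < h0 \<and> h0 < 1 \<and>
         (\<forall>\<alpha> z h. length \<alpha> = 6 \<and> 0 < infnorm h \<and> infnorm h \<le> h0 \<longrightarrow>
            \<bar>iter_partial \<alpha> PH (z + h) - iter_partial \<alpha> PH z\<bar>
              \<le> C * (- ln (infnorm h)) powr (- lam))"
  proof (rule exI[of _ "2 * pi ^ 6 * C0"], rule exI[of _ h0], intro conjI allI impI)
    show "2 * pi ^ 6 * C0 > 0" using C0 by simp
    show "0 < h0" using C0 by auto
    show "h0 < 1" using C0 by auto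
    fix \<alpha> :: "4 list" and z h :: "real^4"
    assume H: "length \<alpha> = 6 \<and> 0 < infnorm h \<and> infnorm h \<le> h0"
    obtain A B where AB: "A \<in> {\<lambda>_. 0, gk q Q 6}" "B \<in> {\<lambda>_. 0, gk q Q 6}"
      "foldr partial \<alpha> (\<lambda>z::real^4. gk q Q 0 (z$1) + gk q Q 0 (z$4)) = (\<lambda>z. A (z$1) + B (z$4))"
      using iter_fam[OF q0 q1 Qpos, of \<alpha>] H by auto
    have ip: "iter_partial \<alpha> PH = (\<lambda>z. A (z$1) + B (z$4))"
      unfolding iter_partial_def PHe AB(3) ..
    have c1: "\<bar>A (z$1 + h$1) - A (z$1)\<bar> \<le> pi ^ 6 * C0 * (- ln (infnorm h)) powr (- lam)"
      using comp[OF AB(1)] H component_le_infnorm_cart[of h 1] by auto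
    have c4: "\<bar>B (z$4 + h$4) - B (z$4)\<bar> \<le> pi ^ 6 * C0 * (- ln (infnorm h)) powr (- lam)"
      using comp[OF AB(2)] H component_le_infnorm_cart[of h 4] by auto
    show "\<bar>iter_partial \<alpha> PH (z + h) - iter_partial \<alpha> PH z\<bar> \<le> 2 * pi ^ 6 * C0 * (- ln (infnorm h)) powr (- lam)"
      unfolding ip using c1 c4 by simp
  qed
  have part3: "\<forall>z. iter_partial [1,1,1,1,1,1] PH z = - (pi ^ 6) * P (z $ 1)"
  proof
    fix z :: "real^4"
    have "[1,1,1,1,1,1] = replicate 6 (1::4)" by (simp add: numeral_eq_Suc)
    then show "iter_partial [1,1,1,1,1,1] PH z = - (pi ^ 6) * P (z $ 1)"
      unfolding iter_partial_def PHe using iter_rep[OF q0 q1 Qpos, of 6] g6 by simp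
  qed
  have part4: "\<forall>x a. 0 < a \<and> a < 1 \<longrightarrow>
         (\<exists>\<upsilon>::nat \<Rightarrow> real. (\<forall>m. \<upsilon> m \<noteq> 0) \<and> \<upsilon> \<longlonglongrightarrow> 0 \<and>
            filterlim (\<lambda>m. \<bar>P (x + \<upsilon> m) - P x\<bar> / \<bar>\<upsilon> m\<bar> powr a) at_top sequentially)"
    unfolding P_def using nowhere[OF assms(1-8)] by blast
  show ?thesis using part1 part2 part3 part4 by blast
qed

end
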